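(* Let $A<0<B$ be integers and let $\mu\in\mathcal M_0(\mathbb Z)$ satisfy $\mu([A,B])=1$, $\mu(\{A\})>0$, $\mu(\{B\})>0$. Define $$\mathcal R_\mu=\{\mathbf r\in[0,1]^{\mathbb Z}: r_i=1\text{ for } i\notin(A,B),\ \text{and } \mathbb P(S_{\tau(\mathbf r)}=i)\le\mu(\{i\})\text{ for } i\in(A,B)\}.$$ If $\mathbf r,\mathbf r'\in\mathcal R_\mu$, then $\tilde{\mathbf r}\in\mathcal R_\mu$, where $\tilde r_i=r_i\vee r'_i$ for all $i\in\mathbb Z$.
   Context: $S=(S_t)_{t\ge0}$ is a simple symmetric random walk on $\mathbb Z$ with $S_0=0$ (discrete time). $\mathcal M_0(\mathbb Z)$ is the set of probability measures on $\mathbb Z$ with finite first moment and mean zero. For $\mathbf r=(r_x)_{x\in\mathbb Z}\in[0,1]^{\mathbb Z}$, let $\{\xi_{t,x}\}_{t\ge0,x\in\mathbb Z}$ be Bernoulli random variables, mutually independent and independent of $S$, with $\mathbb P(\xi_{t,x}=0)=r_x=1-\mathbb P(\xi_{t,x}=1)$, and $\tau(\mathbf r):=\inf\{t\ge0:\xi_{t,S_t}=0\}$ (the law of $S_{\tau(\mathbf r)}$ depends only on $\mathbf r$). *)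

theory Defs
  imports "HOL-Probability.Probability"
begin

text \<open>Probability model: the first coordinate gives the steps of the simple symmetric
random walk (True = +1, False = -1, each with probability 1/2, i.i.d.); the second
coordinate gives the killing indicators: the component at (t,x) is True iff
xi_{t,x} = 0, which has probability r x.\<close>

definition rw_model :: "(int \<Rightarrow> real) \<Rightarrow> ((nat \<Rightarrow> bool) \<times> (nat \<times> int \<Rightarrow> bool)) measure" where
  "rw_model r =
     (\<Pi>\<^sub>M t\<in>(UNIV::nat set). measure_pmf (bernoulli_pmf (1/2)))
     \<Otimes>\<^sub>M (\<Pi>\<^sub>M tx\<in>(UNIV::(nat \<times> int) set). measure_pmf (bernoulli_pmf (r (snd tx))))"

definition rw_pos :: "(nat \<Rightarrow> bool) \<Rightarrow> nat \<Rightarrow> int" where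
  "rw_pos w t = (\<Sum>s<t. if w s then 1 else -1)"

text \<open>P(S_tau = i): tau is finite, equal to t, and S_t = i.\<close>
definition stop_prob :: "(int \<Rightarrow> real) \<Rightarrow> int \<Rightarrow> real" where
  "stop_prob r i = measure (rw_model r)
     {\<omega> \<in> space (rw_model r). \<exists>t.
        snd \<omega> (t, rw_pos (fst \<omega>) t) \<and>
        (\<forall>s<t. \<not> snd \<omega> (s, rw_pos (fst \<omega>) s)) \<and>
        rw_pos (fst \<omega>) t = i}"

definition R_mu :: "int pmf \<Rightarrow> int \<Rightarrow> int \<Rightarrow> (int \<Rightarrow> real) set" where
  "R_mu \<mu> A B = {r. (\<forall>x. 0 \<le> r x \<and> r x \<le> 1) \<and>
                     (\<forall>i. i \<notin> {A<..<B} \<longrightarrow> r i = 1) \<and>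
                     (\<forall>i\<in>{A<..<B}. stop_prob r i \<le> pmf \<mu> i)}"

end

theory Submission
  imports Defs
begin

lemma prod_mono_ennreal:
  fixes f g :: "'a \<Rightarrow> ennreal"
  shows "(\<And>i. i \<in> A \<Longrightarrow> f i \<le> g i) \<Longrightarrow> prod f A \<le> prod g A"
  by (induct A rule: infinite_finite_induct) (auto intro!: mult_mono)

definition Kr :: "(int \<Rightarrow> real) \<Rightarrow> (nat \<times> int \<Rightarrow> bool) measure" where
  "Kr r = (\<Pi>\<^sub>M tx\<in>(UNIV::(nat \<times> int) set). measure_pmf (bernoulli_pmf (r (snd tx))))"

definition Wm :: "(nat \<Rightarrow> bool) measure" where
  "Wm = (\<Pi>\<^sub>M t\<in>(UNIV::nat set). measure_pmf (bernoulli_pmf (1/2)))"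

lemma space_Kr[simp]: "space (Kr r) = UNIV"
  by (simp add: Kr_def space_PiM)
lemma space_Wm[simp]: "space Wm = UNIV"
  by (simp add: Wm_def space_PiM)

lemma rw_model_eq: "rw_model r = Wm \<Otimes>\<^sub>M Kr r"
  by (simp add: rw_model_def Wm_def Kr_def)

lemma prob_Kr: "prob_space (Kr r)"
  unfolding Kr_def by (rule prob_space_PiM) (rule prob_space_measure_pmf)
lemma prob_Wm: "prob_space Wm"
  unfolding Wm_def by (rule prob_space_PiM) (rule prob_space_measure_pmf)

lemma pos_meas: "Measurable.pred Wm (\<lambda>w. rw_pos w t = x)"
proof (induction t arbitrary: x)
  case 0 then show ?case by (simp add: rw_pos_def)
next
  case (Suc t)
  have comp: "Measurable.pred Wm (\<lambda>w. w t)"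
    unfolding Wm_def by measurable
  have eq: "(\<lambda>w. rw_pos w (Suc t) = x) = (\<lambda>w. (w t \<and> rw_pos w t = x - 1) \<or> (\<not> w t \<and> rw_pos w t = x + 1))"
    by (auto simp: rw_pos_def)
  show ?case unfolding eq using comp Suc by measurable
qed

lemma kcomp_meas: "Measurable.pred (Kr r) (\<lambda>k. k tx)"
  unfolding Kr_def by measurable

lemma hit_eq: "k (t, rw_pos w t) = (\<exists>x. rw_pos w t = x \<and> k (t, x))"
  by auto

definition Gset :: "int \<Rightarrow> ((nat \<Rightarrow> bool) \<times> (nat \<times> int \<Rightarrow> bool)) set" where
  "Gset i = {\<omega>. \<exists>t. snd \<omega> (t, rw_pos (fst \<omega>) t) \<and>
        (\<forall>s<t. \<not> snd \<omega> (s, rw_pos (fst \<omega>) s)) \<and> rw_pos (fst \<omega>) t = i}"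

lemma G_meas: "Gset i \<in> sets (Wm \<Otimes>\<^sub>M Kr r)"
proof -
  have p1: "Measurable.pred (Wm \<Otimes>\<^sub>M Kr r) (\<lambda>\<omega>. rw_pos (fst \<omega>) t = x)" for t x
    using pos_meas[of t x] by measurable
  have p2: "Measurable.pred (Wm \<Otimes>\<^sub>M Kr r) (\<lambda>\<omega>. snd \<omega> tx)" for tx
    using kcomp_meas[where r=r and tx=tx] by measurable
  have "Measurable.pred (Wm \<Otimes>\<^sub>M Kr r) (\<lambda>\<omega>. \<exists>t. (\<exists>x. rw_pos (fst \<omega>) t = x \<and> snd \<omega> (t, x)) \<and>
        (\<forall>s<t. \<not> (\<exists>x. rw_pos (fst \<omega>) s = x \<and> snd \<omega> (s, x))) \<and> rw_pos (fst \<omega>) t = i)"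
    using p1 p2 by measurable
  then have "{\<omega> \<in> space (Wm \<Otimes>\<^sub>M Kr r). \<exists>t. (\<exists>x. rw_pos (fst \<omega>) t = x \<and> snd \<omega> (t, x)) \<and>
        (\<forall>s<t. \<not> (\<exists>x. rw_pos (fst \<omega>) s = x \<and> snd \<omega> (s, x))) \<and> rw_pos (fst \<omega>) t = i} \<in> sets (Wm \<Otimes>\<^sub>M Kr r)"
    by measurable
  then show ?thesis by (simp add: Gset_def space_pair_measure)
qed

lemma stop_prob_eq: "stop_prob r i = measure (Wm \<Otimes>\<^sub>M Kr r) (Gset i)"
  by (simp add: stop_prob_def rw_model_eq Gset_def space_pair_measure)

definition Tset :: "(nat \<Rightarrow> bool) \<Rightarrow> int \<Rightarrow> nat \<Rightarrow> (nat \<times> int \<Rightarrow> bool) set" where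
  "Tset w i t = (if rw_pos w t = i then {k. \<forall>j\<in>(\<lambda>s. (s, rw_pos w s)) ` {..t}. k j \<in> (if fst j = t then {True} else {False})} else {})"

lemma T_iff: "k \<in> Tset w i t \<longleftrightarrow> k (t, rw_pos w t) \<and> (\<forall>s<t. \<not> k (s, rw_pos w s)) \<and> rw_pos w t = i"
proof -
  have "k \<in> Tset w i t \<longleftrightarrow> k (t, rw_pos w t) \<and> (\<forall>s<t. \<not> k (s, rw_pos w s)) \<and> rw_pos w t = i" for k t
  proof -
    have "(\<forall>s\<in>{..t}. k (s, rw_pos w s) \<in> (if s = t then {True} else {False})) \<longleftrightarrow>
          k (t, rw_pos w t) \<and> (\<forall>s<t. \<not> k (s, rw_pos w s))"
      by (auto simp: less_le)
    then show ?thesis by (auto simp: Tset_def)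
  qed
  then show ?thesis by blast
qed

lemma slice_eq: "Pair w -` Gset i = (\<Union>t. Tset w i t)"
  using T_iff by (auto simp: Gset_def)

lemma T_emb: "rw_pos w t = i \<Longrightarrow> Tset w i t = prod_emb UNIV (\<lambda>tx. measure_pmf (bernoulli_pmf (r (snd tx))))
   ((\<lambda>s. (s, rw_pos w s)) ` {..t}) (PiE ((\<lambda>s. (s, rw_pos w s)) ` {..t}) (\<lambda>j. if fst j = t then {True} else {False}))"
  by (intro set_eqI) (simp add: Tset_def prod_emb_def space_PiM PiE_iff)

lemma T_sets: "Tset w i t \<in> sets (Kr r)"
proof (cases "rw_pos w t = i")
  case True
  show ?thesis unfolding T_emb[OF True, where r=r] Kr_def
    by (rule sets_PiM_I) auto
qed (simp add: Tset_def)

lemma T_disj: "disjoint_family (Tset w i)"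
  unfolding disjoint_family_on_def
proof (intro ballI impI)
  fix m n :: nat assume "m \<noteq> n"
  show "Tset w i m \<inter> Tset w i n = {}"
  proof (cases "m < n")
    case True then show ?thesis by (auto simp: T_iff)
  next
    case False then have "n < m" using \<open>m \<noteq> n\<close> by simp
    then show ?thesis by (auto simp: T_iff)
  qed
qed

lemma emeasure_bern:
  assumes "0 \<le> q" "q \<le> 1"
  shows "emeasure (measure_pmf (bernoulli_pmf q)) {True} = ennreal q"
    "emeasure (measure_pmf (bernoulli_pmf q)) {False} = ennreal (1 - q)"
  using assms by (simp_all add: emeasure_pmf_single)

lemma T_mono:
  assumes r01: "\<And>x. 0 \<le> r x \<and> r x \<le> 1" and r'01: "\<And>x. 0 \<le> r' x \<and> r' x \<le> 1"
    and le: "\<And>x. r x \<le> r' x" and eqi: "r' i = r i"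
  shows "emeasure (Kr r') (Tset w i t) \<le> emeasure (Kr r) (Tset w i t)"
proof (cases "rw_pos w t = i")
  case True
  let ?J = "(\<lambda>s. (s, rw_pos w s)) ` {..t}"
  let ?X = "(\<lambda>j::nat\<times>int. if fst j = t then {True} else {False})"
  have e: "emeasure (Kr q) (Tset w i t) = (\<Prod>j\<in>?J. emeasure (measure_pmf (bernoulli_pmf (q (snd j)))) (?X j))" for q
    unfolding T_emb[OF True, where r=q] Kr_def
    by (rule emeasure_PiM_emb) (auto intro: prob_space_measure_pmf)
  show ?thesis unfolding e
  proof (rule prod_mono_ennreal)
    fix j assume "j \<in> ?J"
    then obtain s where s: "s \<le> t" "j = (s, rw_pos w s)" by auto
    show "emeasure (measure_pmf (bernoulli_pmf (r' (snd j)))) (?X j) \<le> emeasure (measure_pmf (bernoulli_pmf (r (snd j)))) (?X j)"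
    proof (cases "s = t")
      case True
      then show ?thesis using s \<open>rw_pos w t = i\<close> eqi r01 r'01 by (simp add: emeasure_bern)
    next
      case False
      then show ?thesis using s r01 r'01 le[of "rw_pos w s"] by (simp add: emeasure_bern ennreal_leI)
    qed
  qed
qed (simp add: Tset_def)

lemma slice_mono:
  assumes r01: "\<And>x. 0 \<le> r x \<and> r x \<le> 1" and r'01: "\<And>x. 0 \<le> r' x \<and> r' x \<le> 1"
    and le: "\<And>x. r x \<le> r' x" and eqi: "r' i = r i"
  shows "emeasure (Kr r') (Pair w -` Gset i) \<le> emeasure (Kr r) (Pair w -` Gset i)"
proof -
  have "emeasure (Kr q) (Pair w -` Gset i) = (\<Sum>t. emeasure (Kr q) (Tset w i t))" for q
    unfolding slice_eq by (rule suminf_emeasure[symmetric]) (auto intro: T_sets T_disj)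
  then show ?thesis
    using T_mono[of r r' i w] assms by (simp add: suminf_le)
qed

lemma stop_mono:
  assumes r01: "\<And>x. 0 \<le> r x \<and> r x \<le> 1" and r'01: "\<And>x. 0 \<le> r' x \<and> r' x \<le> 1"
    and le: "\<And>x. r x \<le> r' x" and eqi: "r' i = r i"
  shows "stop_prob r' i \<le> stop_prob r i"
proof -
  interpret K: prob_space "Kr q" for q by (rule prob_Kr)
  interpret W: prob_space Wm by (rule prob_Wm)
  interpret P: pair_prob_space Wm "Kr q" for q by unfold_locales
  have "emeasure (Wm \<Otimes>\<^sub>M Kr q) (Gset i) = (\<integral>\<^sup>+w. emeasure (Kr q) (Pair w -` Gset i) \<partial>Wm)" for q
    by (rule K.emeasure_pair_measure_alt[OF G_meas])
  then have "emeasure (Wm \<Otimes>\<^sub>M Kr r') (Gset i) \<le> emeasure (Wm \<Otimes>\<^sub>M Kr r) (Gset i)"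
    using slice_mono[of r r' i] assms by (simp add: nn_integral_mono)
  then show ?thesis unfolding stop_prob_eq
    by (simp add: P.emeasure_eq_measure)
qed

theorem lemma1:
  fixes \<mu> :: "int pmf" and A B :: int and r r' :: "int \<Rightarrow> real"
  assumes "A < 0" and "0 < B"
    and "integrable (measure_pmf \<mu>) real_of_int"
    and "measure_pmf.expectation \<mu> real_of_int = 0"
    and "measure_pmf.prob \<mu> {A..B} = 1"
    and "pmf \<mu> A > 0" and "pmf \<mu> B > 0"
    and "r \<in> R_mu \<mu> A B" and "r' \<in> R_mu \<mu> A B"
  shows "(\<lambda>i. max (r i) (r' i)) \<in> R_mu \<mu> A B"
proof -
  let ?m = "\<lambda>i. max (r i) (r' i)"
  have r: "\<And>x. 0 \<le> r x \<and> r x \<le> 1" "\<And>i. i \<notin> {A<..<B} \<Longrightarrow> r i = 1"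
    "\<And>i. i \<in> {A<..<B} \<Longrightarrow> stop_prob r i \<le> pmf \<mu> i"
    using assms(8) by (auto simp: R_mu_def)
  have r': "\<And>x. 0 \<le> r' x \<and> r' x \<le> 1" "\<And>i. i \<notin> {A<..<B} \<Longrightarrow> r' i = 1"
    "\<And>i. i \<in> {A<..<B} \<Longrightarrow> stop_prob r' i \<le> pmf \<mu> i"
    using assms(9) by (auto simp: R_mu_def)
  have m01: "\<And>x. 0 \<le> ?m x \<and> ?m x \<le> 1" using r(1) r'(1) by (meson max.coboundedI1 max.bounded_iff)
  have "stop_prob ?m i \<le> pmf \<mu> i" if i: "i \<in> {A<..<B}" for i
  proof (cases "r' i \<le> r i")
    case True
    have "stop_prob ?m i \<le> stop_prob r i"
      by (rule stop_mono) (use r(1) m01 True in auto)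
    then show ?thesis using r(3)[OF i] by linarith
  next
    case False
    have "stop_prob ?m i \<le> stop_prob r' i"
      by (rule stop_mono) (use r'(1) m01 False in auto)
    then show ?thesis using r'(3)[OF i] by linarith
  qed
  then show ?thesis using m01 r(2) r'(2) by (auto simp: R_mu_def)
qed

end
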